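(* Let $S\subseteq R$ be an extension of commutative domains. Then $R$ is super-multiplicative if and only if for every maximal ideal $\mathfrak m$ of $S$ the ring $R_{\mathfrak m}$ is super-multiplicative.
   Context: $R_{\mathfrak m}$ denotes the localization of $R$ at the multiplicative set $S\setminus\mathfrak m$. For a commutative ring $A$ and an ideal $I$ with $[A:I]$ finite, $N(I)=[A:I]$ (additive index). $A$ is super-multiplicative if for every pair of $A$-ideals $I,J$ with $[A:IJ]$ finite one has $N(IJ)\geq N(I)N(J)$. *)

theory Defs
  imports Main "HOL-Computational_Algebra.Fraction_Field"
begin

text \<open>Rings are represented as subsets A of a commutative ring type that are
subrings (contain 0, 1, closed under +, -, *).\<close>

definition subring_set :: "'a::comm_ring_1 set \<Rightarrow> bool" where
  "subring_set A \<longleftrightarrow> 0 \<in> A \<and> 1 \<in> A \<and>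
     (\<forall>x\<in>A. \<forall>y\<in>A. x + y \<in> A \<and> x - y \<in> A \<and> x * y \<in> A)"

definition ideal_of :: "'a::comm_ring_1 set \<Rightarrow> 'a set \<Rightarrow> bool" where
  "ideal_of A I \<longleftrightarrow> I \<subseteq> A \<and> 0 \<in> I \<and>
     (\<forall>x\<in>I. \<forall>y\<in>I. x + y \<in> I \<and> x - y \<in> I) \<and>
     (\<forall>a\<in>A. \<forall>x\<in>I. a * x \<in> I)"

definition maximal_ideal_of :: "'a::comm_ring_1 set \<Rightarrow> 'a set \<Rightarrow> bool" where
  "maximal_ideal_of A M \<longleftrightarrow> ideal_of A M \<and> M \<noteq> A \<and>
     (\<forall>J. ideal_of A J \<and> M \<subseteq> J \<longrightarrow> J = M \<or> J = A)"

definition ideal_prod :: "'a::comm_ring_1 set \<Rightarrow> 'a set \<Rightarrow> 'a set \<Rightarrow> 'a set" where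
  "ideal_prod A I J = \<Inter> {K. ideal_of A K \<and> {i * j | i j. i \<in> I \<and> j \<in> J} \<subseteq> K}"

definition cosets_in :: "'a::comm_ring_1 set \<Rightarrow> 'a set \<Rightarrow> 'a set set" where
  "cosets_in A I = (\<lambda>a. {a + i | i. i \<in> I}) ` A"

definition norm_idx :: "'a::comm_ring_1 set \<Rightarrow> 'a set \<Rightarrow> nat" where
  "norm_idx A I = card (cosets_in A I)"

definition super_multiplicative :: "'a::comm_ring_1 set \<Rightarrow> bool" where
  "super_multiplicative A \<longleftrightarrow>
     (\<forall>I J. ideal_of A I \<and> ideal_of A J \<and> finite (cosets_in A (ideal_prod A I J)) \<longrightarrow>
        norm_idx A (ideal_prod A I J) \<ge> norm_idx A I * norm_idx A J)"

text \<open>Localization R_m of the domain R (= UNIV) at S - m, realised inside the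
fraction field of R.\<close>
definition localize :: "'a::idom set \<Rightarrow> 'a set \<Rightarrow> 'a fract set" where
  "localize S m = {Fract r s | r s. s \<in> S \<and> s \<notin> m}"

end

theory Submission
  imports Defs
begin


definition cs :: "'a::comm_ring_1 set \<Rightarrow> 'a \<Rightarrow> 'a set" where
  "cs X a = {a + i |i. i \<in> X}"

lemma cosets_cs: "cosets_in A I = cs I ` A"
  by (simp add: cosets_in_def cs_def)

lemma idealD:
  assumes "ideal_of A I"
  shows "I \<subseteq> A" "0 \<in> I" "x \<in> I \<Longrightarrow> y \<in> I \<Longrightarrow> x + y \<in> I"
    "x \<in> I \<Longrightarrow> y \<in> I \<Longrightarrow> x - y \<in> I" "a \<in> A \<Longrightarrow> x \<in> I \<Longrightarrow> a * x \<in> I"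
  using assms unfolding ideal_of_def by auto

lemma ideal_neg: "ideal_of A I \<Longrightarrow> x \<in> I \<Longrightarrow> - x \<in> I"
  by (metis idealD(2,4) diff_0)

lemma cs_eq:
  assumes "ideal_of A I"
  shows "cs I a = cs I b \<longleftrightarrow> a - b \<in> I"
proof
  assume h: "cs I a = cs I b"
  have "a \<in> cs I a" unfolding cs_def using idealD(2)[OF assms] by force
  then obtain i where "i \<in> I" "a = b + i" using h unfolding cs_def by auto
  then show "a - b \<in> I" by simp
next
  assume h: "a - b \<in> I"
  show "cs I a = cs I b"
  proof (rule set_eqI)
    fix z
    show "z \<in> cs I a \<longleftrightarrow> z \<in> cs I b"
    proof
      assume "z \<in> cs I a"
      then obtain i where i: "i \<in> I" "z = a + i" unfolding cs_def by auto
      have "(a - b) + i \<in> I" using idealD(3)[OF assms h i(1)] .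
      moreover have "z = b + ((a - b) + i)" using i by simp
      ultimately show "z \<in> cs I b" unfolding cs_def by blast
    next
      assume "z \<in> cs I b"
      then obtain i where i: "i \<in> I" "z = b + i" unfolding cs_def by auto
      have "i - (a - b) \<in> I" using idealD(4)[OF assms i(1) h] .
      moreover have "z = a + (i - (a - b))" using i by simp
      ultimately show "z \<in> cs I a" unfolding cs_def by blast
    qed
  qed
qed

lemma card_img_le:
  assumes "\<forall>a\<in>A. \<forall>b\<in>A. \<psi> a = \<psi> b \<longrightarrow> \<phi> a = \<phi> b" "finite (\<psi> ` A)"
  shows "finite (\<phi> ` A) \<and> card (\<phi> ` A) \<le> card (\<psi> ` A)"
    "a \<in> A \<Longrightarrow> b \<in> A \<Longrightarrow> \<psi> a \<noteq> \<psi> b \<Longrightarrow> \<phi> a = \<phi> b \<Longrightarrow> card (\<phi> ` A) < card (\<psi> ` A)"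
proof -
  define G where "G X = \<phi> (inv_into A \<psi> X)" for X
  have G: "G (\<psi> a) = \<phi> a" if "a \<in> A" for a
  proof -
    define b where "b = inv_into A \<psi> (\<psi> a)"
    have b: "b \<in> A" using that unfolding b_def by (simp add: inv_into_into)
    have "\<psi> b = \<psi> a" using that unfolding b_def by (simp add: f_inv_into_f)
    then have "\<phi> b = \<phi> a" using assms(1) b that by blast
    then show ?thesis unfolding G_def b_def by simp
  qed
  have img: "\<phi> ` A = G ` (\<psi> ` A)"
    proof
    show "\<phi> ` A \<subseteq> G ` (\<psi> ` A)"
    proof
      fix x assume "x \<in> \<phi> ` A"
      then obtain a where a: "a \<in> A" "x = \<phi> a" by blast
      then have "x = G (\<psi> a)" using G by simp
      then show "x \<in> G ` (\<psi> ` A)" using a by blast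
    qed
    show "G ` (\<psi> ` A) \<subseteq> \<phi> ` A" using G by auto
  qed
  show "finite (\<phi> ` A) \<and> card (\<phi> ` A) \<le> card (\<psi> ` A)"
    unfolding img using assms(2) by (simp add: card_image_le)
  assume ab: "a \<in> A" "b \<in> A" "\<psi> a \<noteq> \<psi> b" "\<phi> a = \<phi> b"
  have "\<not> inj_on G (\<psi> ` A)"
  proof
    assume inj: "inj_on G (\<psi> ` A)"
    have "G (\<psi> a) = G (\<psi> b)" using G ab by simp
    moreover have "\<psi> a \<in> \<psi> ` A" "\<psi> b \<in> \<psi> ` A" using ab by auto
    ultimately have "\<psi> a = \<psi> b" using inj_onD[OF inj] by blast
    then show False using ab(3) by blast
  qed
  then have "card (G ` (\<psi> ` A)) \<noteq> card (\<psi> ` A)"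
    using eq_card_imp_inj_on[OF assms(2)] by blast
  moreover have "card (G ` (\<psi> ` A)) \<le> card (\<psi> ` A)" using assms(2) by (simp add: card_image_le)
  ultimately show "card (\<phi> ` A) < card (\<psi> ` A)" unfolding img by simp
qed

lemma card_img_eq:
  assumes "\<forall>a\<in>A. \<forall>b\<in>A. \<psi> a = \<psi> b \<longleftrightarrow> \<phi> a = \<phi> b"
  shows "finite (\<psi> ` A) \<longleftrightarrow> finite (\<phi> ` A)" "card (\<psi> ` A) = card (\<phi> ` A)"
proof -
  have a1: "\<forall>a\<in>A. \<forall>b\<in>A. \<psi> a = \<psi> b \<longrightarrow> \<phi> a = \<phi> b" "\<forall>a\<in>A. \<forall>b\<in>A. \<phi> a = \<phi> b \<longrightarrow> \<psi> a = \<psi> b"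
    using assms by auto
  show "finite (\<psi> ` A) \<longleftrightarrow> finite (\<phi> ` A)" using card_img_le(1)[OF a1(1)] card_img_le(1)[OF a1(2)] by blast
  show "card (\<psi> ` A) = card (\<phi> ` A)"
  proof (cases "finite (\<psi> ` A)")
    case True
    then have "finite (\<phi> ` A)" using card_img_le(1)[OF a1(1)] by blast
    then show ?thesis using card_img_le(1)[OF a1(1)] card_img_le(1)[OF a1(2)] True by (simp add: le_antisym)
  next
    case False
    then have "infinite (\<phi> ` A)" using card_img_le(1)[OF a1(2)] by blast
    then show ?thesis using False by simp
  qed
qed

lemma prod_mem: "i \<in> I \<Longrightarrow> j \<in> J \<Longrightarrow> i * j \<in> ideal_prod A I J"
  unfolding ideal_prod_def by blast

lemma prod_least: "ideal_of A K \<Longrightarrow> (\<And>i j. i \<in> I \<Longrightarrow> j \<in> J \<Longrightarrow> i * j \<in> K) \<Longrightarrow> ideal_prod A I J \<subseteq> K"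
  unfolding ideal_prod_def by blast

lemma subring_ideal: "subring_set A \<Longrightarrow> ideal_of A A"
  unfolding subring_set_def ideal_of_def by auto

lemma prod_ideal:
  assumes "subring_set A" "I \<subseteq> A" "J \<subseteq> A"
  shows "ideal_of A (ideal_prod A I J)"
proof -
  define F where "F = {K. ideal_of A K \<and> {i * j | i j. i \<in> I \<and> j \<in> J} \<subseteq> K}"
  have "\<forall>x\<in>A. \<forall>y\<in>A. x * y \<in> A" using assms(1) unfolding subring_set_def by blast
  then have AF: "A \<in> F" unfolding F_def using subring_ideal[OF assms(1)] assms(2,3) by blast
  have eq: "ideal_prod A I J = \<Inter>F" unfolding ideal_prod_def F_def by simp
  have FI: "ideal_of A K" if "K \<in> F" for K using that unfolding F_def by blast
  show ?thesis unfolding eq ideal_of_def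
  proof (intro conjI ballI)
    show "\<Inter>F \<subseteq> A" using AF by blast
    show "0 \<in> \<Inter>F" using FI idealD(2) by blast
    fix x y assume xy: "x \<in> \<Inter>F" "y \<in> \<Inter>F"
    show "x + y \<in> \<Inter>F"
    proof
      fix K assume "K \<in> F" then show "x + y \<in> K" using FI idealD(3) xy by blast
    qed
    show "x - y \<in> \<Inter>F"
    proof
      fix K assume "K \<in> F" then show "x - y \<in> K" using FI idealD(4) xy by blast
    qed
  next
    fix a x assume ax: "a \<in> A" "x \<in> \<Inter>F"
    show "a * x \<in> \<Inter>F"
    proof
      fix K assume "K \<in> F" then show "a * x \<in> K" using FI idealD(5) ax by blast
    qed
  qed
qed

lemma mono_cosets:
  assumes "ideal_of A X" "ideal_of A Y" "X \<subseteq> Y" "finite (cosets_in A X)"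
  shows "finite (cosets_in A Y) \<and> card (cosets_in A Y) \<le> card (cosets_in A X)"
    "y \<in> Y \<Longrightarrow> y \<notin> X \<Longrightarrow> card (cosets_in A Y) < card (cosets_in A X)"
proof -
  have h: "\<forall>a\<in>A. \<forall>b\<in>A. cs X a = cs X b \<longrightarrow> cs Y a = cs Y b"
    using assms(1-3) by (auto simp: cs_eq)
  show "finite (cosets_in A Y) \<and> card (cosets_in A Y) \<le> card (cosets_in A X)"
    using card_img_le(1)[OF h] assms(4) by (simp add: cosets_cs)
  assume y: "y \<in> Y" "y \<notin> X"
  have yA: "y \<in> A" "0 \<in> A" using y idealD(1,2)[OF assms(2)] by auto
  show "card (cosets_in A Y) < card (cosets_in A X)"
    using card_img_le(2)[OF h _ yA] assms y by (simp add: cosets_cs cs_eq)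
qed



lemma subD:
  assumes "subring_set S"
  shows "0 \<in> S" "1 \<in> S" "x \<in> S \<Longrightarrow> y \<in> S \<Longrightarrow> x + y \<in> S"
    "x \<in> S \<Longrightarrow> y \<in> S \<Longrightarrow> x - y \<in> S" "x \<in> S \<Longrightarrow> y \<in> S \<Longrightarrow> x * y \<in> S"
  using assms unfolding subring_set_def by auto

lemma pow_S: "subring_set S \<Longrightarrow> x \<in> S \<Longrightarrow> x ^ n \<in> S"
  by (induction n) (auto intro: subD)

lemma max_basic:
  assumes "subring_set S" "maximal_ideal_of S M"
  shows "ideal_of S M" "M \<subseteq> S" "0 \<in> M" "1 \<notin> M"
proof -
  show I: "ideal_of S M" using assms(2) unfolding maximal_ideal_of_def by blast
  show "M \<subseteq> S" "0 \<in> M" using idealD[OF I] by auto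
  show "1 \<notin> M"
  proof
    assume "1 \<in> M"
    then have "\<forall>s\<in>S. s * 1 \<in> M" using idealD(5)[OF I] by blast
    then have "S \<subseteq> M" by auto
    then show False using assms(2) idealD(1)[OF I] unfolding maximal_ideal_of_def by blast
  qed
qed

lemma max_prime:
  assumes S: "subring_set S" and M: "maximal_ideal_of S M"
    and xy: "x \<in> S" "y \<in> S" "x * y \<in> M" "x \<notin> M"
  shows "y \<in> M"
proof -
  have IM: "ideal_of S M" and MS: "M \<subseteq> S" using max_basic[OF S M] by auto
  define J where "J = {u + x * t | u t. u \<in> M \<and> t \<in> S}"
  have "ideal_of S J" unfolding ideal_of_def
  proof (intro conjI ballI)
    show "J \<subseteq> S" unfolding J_def using MS xy(1) subD[OF S] by blast
    show "0 \<in> J" unfolding J_def using idealD(2)[OF IM] subD(1)[OF S] by force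
    fix p q assume "p \<in> J" "q \<in> J"
    then obtain u1 t1 u2 t2 where h: "u1 \<in> M" "t1 \<in> S" "p = u1 + x * t1" "u2 \<in> M" "t2 \<in> S" "q = u2 + x * t2"
      unfolding J_def by blast
    have "p + q = (u1 + u2) + x * (t1 + t2)" using h by (simp add: algebra_simps)
    moreover have "u1 + u2 \<in> M" "t1 + t2 \<in> S" using h idealD(3)[OF IM] subD(3)[OF S] by auto
    ultimately show "p + q \<in> J" unfolding J_def by blast
    have "p - q = (u1 - u2) + x * (t1 - t2)" using h by (simp add: algebra_simps)
    moreover have "u1 - u2 \<in> M" "t1 - t2 \<in> S" using h idealD(4)[OF IM] subD(4)[OF S] by auto
    ultimately show "p - q \<in> J" unfolding J_def by blast
  next
    fix a p assume "a \<in> S" "p \<in> J"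
    then obtain u t where h: "u \<in> M" "t \<in> S" "p = u + x * t" "a \<in> S"
      unfolding J_def by blast
    have "a * p = a * u + x * (a * t)" using h by (simp add: algebra_simps)
    moreover have "a * u \<in> M" "a * t \<in> S" using h idealD(5)[OF IM] subD(5)[OF S] by auto
    ultimately show "a * p \<in> J" unfolding J_def by blast
  qed
  moreover have "M \<subseteq> J"
  proof
    fix u assume "u \<in> M"
    then have "u = u + x * 0" "0 \<in> S" using subD[OF S] by auto
    then show "u \<in> J" unfolding J_def using \<open>u \<in> M\<close> by blast
  qed
  moreover have "x \<in> J" unfolding J_def using idealD(2)[OF IM] subD(2)[OF S]
    by (metis (mono_tags, lifting) add_0 mem_Collect_eq mult_1_right)
  ultimately have "J = S" using M xy(4) unfolding maximal_ideal_of_def by blast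
  then obtain u t where h: "u \<in> M" "t \<in> S" "1 = u + x * t" using subD(2)[OF S] unfolding J_def by blast
  have "y = y * u + t * (x * y)" using h by (metis add.commute distrib_left mult.commute mult.left_commute mult_1_right)
  moreover have "y * u \<in> M" "t * (x * y) \<in> M" using h xy idealD(5)[OF IM] by auto
  ultimately show "y \<in> M" using idealD(3)[OF IM] by metis
qed

lemma U_mult:
  assumes S: "subring_set S" and M: "maximal_ideal_of S M"
    and "s \<in> S" "s \<notin> M" "t \<in> S" "t \<notin> M"
  shows "s * t \<in> S" "s * t \<notin> M"
  using assms max_prime[OF S M] subD(5)[OF S] by blast+

lemma U_pow:
  assumes S: "subring_set S" and M: "maximal_ideal_of S M"
    and "s \<in> S" "s \<notin> M"
  shows "s ^ n \<in> S \<and> s ^ n \<notin> M"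
proof (induction n)
  case 0 then show ?case using max_basic[OF S M] subD[OF S] by simp
next
  case (Suc n) then show ?case using U_mult[OF S M] assms(3,4) by simp
qed

lemma U_nz: "subring_set S \<Longrightarrow> maximal_ideal_of S M \<Longrightarrow> s \<notin> M \<Longrightarrow> s \<noteq> 0"
  using max_basic by metis

lemma L_mem: "s \<in> S \<Longrightarrow> s \<notin> M \<Longrightarrow> Fract r s \<in> localize S M"
  unfolding localize_def by blast

lemma L_cases: "q \<in> localize S M \<Longrightarrow> \<exists>r s. q = Fract r s \<and> s \<in> S \<and> s \<notin> M"
  unfolding localize_def by blast

lemma L_one: "subring_set S \<Longrightarrow> maximal_ideal_of S M \<Longrightarrow> Fract r 1 \<in> localize S M"
  using L_mem max_basic subD by metis

lemma L_subring:
  assumes S: "subring_set S" and M: "maximal_ideal_of S M"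
  shows "subring_set (localize S M)"
  unfolding subring_set_def
proof (intro conjI ballI)
  show "0 \<in> localize S M" using L_one[OF S M] Zero_fract_def by metis
  show "1 \<in> localize S M" using L_one[OF S M] One_fract_def by metis
  fix p q assume "p \<in> localize S M" "q \<in> localize S M"
  then obtain a b c d where h: "p = Fract a b" "b \<in> S" "b \<notin> M" "q = Fract c d" "d \<in> S" "d \<notin> M"
    using L_cases by metis
  have nz: "b \<noteq> 0" "d \<noteq> 0" using h U_nz[OF S M] by auto
  have bd: "b * d \<in> S" "b * d \<notin> M" using U_mult[OF S M] h by auto
  show "p + q \<in> localize S M" using h nz bd L_mem by simp
  show "p - q \<in> localize S M" using h nz bd L_mem by simp
  show "p * q \<in> localize S M" using h nz bd L_mem by simp
qed

definition ext :: "'a::idom set \<Rightarrow> 'a set \<Rightarrow> 'a set \<Rightarrow> 'a fract set" where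
  "ext S M X = {Fract x s | x s. x \<in> X \<and> s \<in> S \<and> s \<notin> M}"

lemma ext_ideal:
  assumes S: "subring_set S" and M: "maximal_ideal_of S M" and X: "ideal_of UNIV X"
  shows "ideal_of (localize S M) (ext S M X)"
  unfolding ideal_of_def
proof (intro conjI ballI)
  show "ext S M X \<subseteq> localize S M" unfolding ext_def localize_def by blast
  have "0 = Fract (0::'a) 1" by (simp add: Zero_fract_def)
  then show "0 \<in> ext S M X" unfolding ext_def using idealD(2)[OF X] max_basic[OF S M] subD[OF S] by blast
  fix p q assume "p \<in> ext S M X" "q \<in> ext S M X"
  then obtain a b c d where h: "p = Fract a b" "b \<in> S" "b \<notin> M" "q = Fract c d" "d \<in> S" "d \<notin> M"
     "a \<in> X" "c \<in> X"
    unfolding ext_def by blast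
  have nz: "b \<noteq> 0" "d \<noteq> 0" using h U_nz[OF S M] by auto
  have bd: "b * d \<in> S" "b * d \<notin> M" using U_mult[OF S M] h by auto
  have "a * d + c * b \<in> X" "a * d - c * b \<in> X"
    using h idealD[OF X] by (metis UNIV_I mult.commute)+
  then show "p + q \<in> ext S M X" "p - q \<in> ext S M X" using h nz bd unfolding ext_def by auto
next
  fix p q assume "p \<in> localize S M" "q \<in> ext S M X"
  then obtain a b c d where h: "p = Fract a b" "b \<in> S" "b \<notin> M" "q = Fract c d" "d \<in> S" "d \<notin> M"
     "c \<in> X"
    unfolding ext_def localize_def by blast
  have bd: "b * d \<in> S" "b * d \<notin> M" using U_mult[OF S M] h by auto
  have "a * c \<in> X" using h idealD(5)[OF X] by blast
  then show "p * q \<in> ext S M X" using h bd unfolding ext_def by auto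
qed

lemma con_ideal:
  assumes S: "subring_set S" and M: "maximal_ideal_of S M" and Y: "ideal_of (localize S M) Y"
  shows "ideal_of UNIV {a. Fract a 1 \<in> Y}"
  unfolding ideal_of_def
proof (intro conjI ballI)
  show "{a. Fract a 1 \<in> Y} \<subseteq> UNIV" by simp
  show "0 \<in> {a. Fract a 1 \<in> Y}" using idealD(2)[OF Y] by (simp add: Zero_fract_def)
  fix x y assume "x \<in> {a. Fract a 1 \<in> Y}" "y \<in> {a. Fract a 1 \<in> Y}"
  then have h: "Fract x 1 \<in> Y" "Fract y 1 \<in> Y" by auto
  have "Fract x 1 + Fract y 1 \<in> Y" "Fract x 1 - Fract y 1 \<in> Y" using idealD(3,4)[OF Y h] by auto
  then show "x + y \<in> {a. Fract a 1 \<in> Y}" "x - y \<in> {a. Fract a 1 \<in> Y}" by auto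
next
  fix r x assume "x \<in> {a. Fract a 1 \<in> Y}"
  then have "Fract r 1 * Fract x 1 \<in> Y" using idealD(5)[OF Y] L_one[OF S M] by blast
  then show "r * x \<in> {a. Fract a 1 \<in> Y}" by simp
qed

lemma transfer_card:
  assumes Y: "ideal_of L Y" and X: "ideal_of UNIV X" and L: "\<forall>a. Fract a 1 \<in> L"
    and mem: "\<forall>a. a \<in> X \<longleftrightarrow> Fract a 1 \<in> Y" and sur: "\<forall>q\<in>L. \<exists>a. q - Fract a 1 \<in> Y"
  shows "finite (cosets_in UNIV X) \<longleftrightarrow> finite (cosets_in L Y)"
    "card (cosets_in UNIV X) = card (cosets_in L Y)"
proof -
  have h: "\<forall>a\<in>UNIV. \<forall>b\<in>UNIV. cs X a = cs X b \<longleftrightarrow> (\<lambda>a. cs Y (Fract a 1)) a = (\<lambda>a. cs Y (Fract a 1)) b"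
  proof (intro ballI)
    fix a b :: 'a
    have "cs X a = cs X b \<longleftrightarrow> a - b \<in> X" using cs_eq[OF X] .
    also have "\<dots> \<longleftrightarrow> Fract (a - b) 1 \<in> Y" using mem by blast
    also have "Fract (a - b) 1 = Fract a 1 - Fract b 1" by simp
    also have "Fract a 1 - Fract b 1 \<in> Y \<longleftrightarrow> cs Y (Fract a 1) = cs Y (Fract b 1)" using cs_eq[OF Y] by simp
    finally show "cs X a = cs X b \<longleftrightarrow> (\<lambda>a. cs Y (Fract a 1)) a = (\<lambda>a. cs Y (Fract a 1)) b" by simp
  qed
  have img: "(\<lambda>a. cs Y (Fract a 1)) ` UNIV = cs Y ` L"
  proof
    show "(\<lambda>a. cs Y (Fract a 1)) ` UNIV \<subseteq> cs Y ` L" using L by blast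
    show "cs Y ` L \<subseteq> (\<lambda>a. cs Y (Fract a 1)) ` UNIV"
    proof
      fix z assume "z \<in> cs Y ` L"
      then obtain q where q: "q \<in> L" "z = cs Y q" by blast
      then obtain a where "q - Fract a 1 \<in> Y" using sur by blast
      then have "z = cs Y (Fract a 1)" using q cs_eq[OF Y] by blast
      then show "z \<in> (\<lambda>a. cs Y (Fract a 1)) ` UNIV" by blast
    qed
  qed
  show "finite (cosets_in UNIV X) \<longleftrightarrow> finite (cosets_in L Y)"
    using card_img_eq(1)[OF h] img by (simp add: cosets_cs)
  show "card (cosets_in UNIV X) = card (cosets_in L Y)"
    using card_img_eq(2)[OF h] img by (simp add: cosets_cs)
qed



lemma subring_UNIV: "subring_set (UNIV :: 'a::comm_ring_1 set)"
  unfolding subring_set_def by simp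

lemma pigeon_nat:
  assumes "finite (range (f :: nat \<Rightarrow> 'b))"
  shows "\<exists>i j. i < j \<and> f i = f j"
proof (rule ccontr)
  assume "\<not> ?thesis"
  then have "inj f" unfolding inj_def by (metis linorder_neqE_nat)
  then have "infinite (range f)" using finite_imageD by blast
  then show False using assms by blast
qed

lemma unit_mod:
  assumes S: "subring_set S" and M: "maximal_ideal_of S M"
    and K: "ideal_of (localize S M) K" and fin: "finite (cosets_in (localize S M) K)"
    and s: "s \<in> S" "s \<notin> M"
  shows "\<exists>t. Fract (s * t - 1) 1 \<in> K"
proof -
  let ?L = "localize S M"
  define f where "f k = cs K (Fract (s ^ k) 1)" for k
  have "range f \<subseteq> cosets_in ?L K" unfolding f_def cosets_cs using L_one[OF S M] by blast
  then have "finite (range f)" using fin finite_subset by blast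
  then obtain i j where ij: "i < j" "f i = f j" using pigeon_nat by blast
  then have "Fract (s ^ i) 1 - Fract (s ^ j) 1 \<in> K" unfolding f_def using cs_eq[OF K] by blast
  then have h1: "Fract (s ^ i - s ^ j) 1 \<in> K" by simp
  have si: "s ^ i \<in> S" "s ^ i \<notin> M" using U_pow[OF S M s] by auto
  then have si0: "s ^ i \<noteq> 0" using U_nz[OF S M] by blast
  have "Fract 1 (s ^ i) * Fract (s ^ i - s ^ j) 1 \<in> K"
    using idealD(5)[OF K L_mem[OF si] h1] .
  moreover have "Fract 1 (s ^ i) * Fract (s ^ i - s ^ j) 1 = Fract (1 - s ^ (j - i)) 1"
  proof -
    have "s ^ j = s ^ i * s ^ (j - i)" using ij(1) by (metis le_add_diff_inverse less_imp_le power_add)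
    then show ?thesis using si0 by (simp add: eq_fract algebra_simps)
  qed
  ultimately have "Fract (1 - s ^ (j - i)) 1 \<in> K" by simp
  then have "- Fract (1 - s ^ (j - i)) 1 \<in> K" using ideal_neg[OF K] by blast
  moreover have "- Fract (1 - s ^ (j - i)) 1 = Fract (s * s ^ (j - i - 1) - 1) 1"
  proof -
    have "s * s ^ (j - i - 1) = s ^ (j - i)" using ij(1)
      by (metis Suc_diff_Suc diff_Suc_1 power_Suc zero_less_diff)
    then show ?thesis by simp
  qed
  ultimately show ?thesis by metis
qed

lemma fwd:
  fixes S :: "'a::idom set"
  assumes S: "subring_set S" and M: "maximal_ideal_of S M"
    and R: "super_multiplicative (UNIV :: 'a set)"
  shows "super_multiplicative (localize S M)"
  unfolding super_multiplicative_def
proof (intro allI impI)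
  let ?L = "localize S M"
  fix I' J' assume a: "ideal_of ?L I' \<and> ideal_of ?L J' \<and> finite (cosets_in ?L (ideal_prod ?L I' J'))"
  define K where "K = ideal_prod ?L I' J'"
  have I': "ideal_of ?L I'" and J': "ideal_of ?L J'" and fin: "finite (cosets_in ?L K)"
    using a K_def by auto
  have LS: "subring_set ?L" using L_subring[OF S M] .
  have IL: "I' \<subseteq> ?L" "J' \<subseteq> ?L" using idealD(1) I' J' by auto
  have K: "ideal_of ?L K" unfolding K_def using prod_ideal[OF LS IL] .
  have KI: "K \<subseteq> I'" unfolding K_def
  proof (rule prod_least[OF I'])
    fix i j assume "i \<in> I'" "j \<in> J'"
    then show "i * j \<in> I'" using idealD(5)[OF I'] IL by (metis mult.commute subsetD)
  qed
  have KJ: "K \<subseteq> J'" unfolding K_def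
  proof (rule prod_least[OF J'])
    fix i j assume "i \<in> I'" "j \<in> J'"
    then show "i * j \<in> J'" using idealD(5)[OF J'] IL by blast
  qed
  have unit: "\<exists>t. Fract (s * t - 1) 1 \<in> K" if "s \<in> S" "s \<notin> M" for s
    using unit_mod[OF S M K fin that] .
  define Ic where "Ic = {a. Fract a 1 \<in> I'}"
  define Jc where "Jc = {a. Fract a 1 \<in> J'}"
  define Kc where "Kc = {a. Fract a 1 \<in> K}"
  define P where "P = ideal_prod UNIV Ic Jc"
  have Ic: "ideal_of UNIV Ic" unfolding Ic_def using con_ideal[OF S M I'] .
  have Jc: "ideal_of UNIV Jc" unfolding Jc_def using con_ideal[OF S M J'] .
  have Kc: "ideal_of UNIV Kc" unfolding Kc_def using con_ideal[OF S M K] .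
  have P: "ideal_of UNIV P" unfolding P_def using prod_ideal[OF subring_UNIV] by blast
  have memP: "a \<in> P \<longleftrightarrow> Fract a 1 \<in> K" for a
  proof
    assume "a \<in> P"
    moreover have "P \<subseteq> Kc" unfolding P_def
    proof (rule prod_least[OF Kc])
      fix i j assume "i \<in> Ic" "j \<in> Jc"
      then have "Fract i 1 * Fract j 1 \<in> K" unfolding K_def Ic_def Jc_def by (blast intro: prod_mem)
      then show "i * j \<in> Kc" unfolding Kc_def by simp
    qed
    ultimately show "Fract a 1 \<in> K" unfolding Kc_def by blast
  next
    assume aK: "Fract a 1 \<in> K"
    have E: "ideal_of ?L (ext S M P)" using ext_ideal[OF S M P] .
    have "K \<subseteq> ext S M P" unfolding K_def
    proof (rule prod_least[OF E])
      fix i j assume ij: "i \<in> I'" "j \<in> J'"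
      obtain x s1 where x: "i = Fract x s1" "s1 \<in> S" "s1 \<notin> M" using L_cases ij IL by blast
      obtain y s2 where y: "j = Fract y s2" "s2 \<in> S" "s2 \<notin> M" using L_cases ij IL by blast
      have nz: "s1 \<noteq> 0" "s2 \<noteq> 0" using x y U_nz[OF S M] by auto
      have "Fract s1 1 * i \<in> I'" using idealD(5)[OF I' L_one[OF S M] ij(1)] .
      moreover have "Fract s1 1 * i = Fract x 1" using x nz by (simp add: eq_fract)
      ultimately have xI: "x \<in> Ic" unfolding Ic_def by simp
      have "Fract s2 1 * j \<in> J'" using idealD(5)[OF J' L_one[OF S M] ij(2)] .
      moreover have "Fract s2 1 * j = Fract y 1" using y nz by (simp add: eq_fract)
      ultimately have yJ: "y \<in> Jc" unfolding Jc_def by simp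
      have "x * y \<in> P" unfolding P_def using prod_mem[OF xI yJ] .
      moreover have "s1 * s2 \<in> S" "s1 * s2 \<notin> M" using U_mult[OF S M] x y by auto
      moreover have "i * j = Fract (x * y) (s1 * s2)" using x y by simp
      ultimately show "i * j \<in> ext S M P" unfolding ext_def by blast
    qed
    then obtain p s where ps: "Fract a 1 = Fract p s" "p \<in> P" "s \<in> S" "s \<notin> M"
      using aK unfolding ext_def by blast
    have s0: "s \<noteq> 0" using ps U_nz[OF S M] by blast
    have as: "a * s = p" using ps(1) s0 by (simp add: eq_fract)
    obtain t where t: "Fract (s * t - 1) 1 \<in> K" using unit ps by blast
    have "s * t - 1 \<in> Ic" "s * t - 1 \<in> Jc" using t KI KJ unfolding Ic_def Jc_def by auto
    then have sq: "(s * t - 1) * (s * t - 1) \<in> P" unfolding P_def by (rule prod_mem)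
    have "a = (2 * t - s * t * t) * (a * s) + a * ((s * t - 1) * (s * t - 1))"
      by (simp add: algebra_simps)
    moreover have "(2 * t - s * t * t) * (a * s) \<in> P" using as ps(2) idealD(5)[OF P] by blast
    moreover have "a * ((s * t - 1) * (s * t - 1)) \<in> P" using sq idealD(5)[OF P] by blast
    ultimately show "a \<in> P" using idealD(3)[OF P] by metis
  qed
  have surj: "\<forall>q\<in>?L. \<exists>a. q - Fract a 1 \<in> Y" if Y: "ideal_of ?L Y" "K \<subseteq> Y" for Y
  proof
    fix q assume "q \<in> ?L"
    then obtain r s where q: "q = Fract r s" "s \<in> S" "s \<notin> M" using L_cases by blast
    have s0: "s \<noteq> 0" using q U_nz[OF S M] by blast
    obtain t where t: "Fract (s * t - 1) 1 \<in> K" using unit q by blast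
    have "Fract (- r) s * Fract (s * t - 1) 1 \<in> Y" using idealD(5)[OF Y(1) L_mem[OF q(2,3)]] t Y(2) by blast
    moreover have "Fract (- r) s * Fract (s * t - 1) 1 = q - Fract (r * t) 1"
      using q s0 by (simp add: eq_fract algebra_simps)
    ultimately show "\<exists>a. q - Fract a 1 \<in> Y" by metis
  qed
  have Lone: "\<forall>a. Fract a 1 \<in> ?L" using L_one[OF S M] by blast
  note tI = transfer_card[OF I' Ic Lone _ surj[OF I' KI]]
  note tJ = transfer_card[OF J' Jc Lone _ surj[OF J' KJ]]
  note tK = transfer_card[OF K P Lone _ surj[OF K order_refl]]
  have finP: "finite (cosets_in UNIV P)" using tK(1) memP fin by blast
  have "norm_idx UNIV P \<ge> norm_idx UNIV Ic * norm_idx UNIV Jc"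
  proof -
    have "\<forall>(I::'a set) J. ideal_of UNIV I \<and> ideal_of UNIV J \<and> finite (cosets_in UNIV (ideal_prod UNIV I J)) \<longrightarrow>
        norm_idx UNIV (ideal_prod UNIV I J) \<ge> norm_idx UNIV I * norm_idx UNIV J"
      using R unfolding super_multiplicative_def .
    then have "ideal_of UNIV Ic \<and> ideal_of UNIV Jc \<and> finite (cosets_in UNIV (ideal_prod UNIV Ic Jc)) \<longrightarrow>
        norm_idx UNIV (ideal_prod UNIV Ic Jc) \<ge> norm_idx UNIV Ic * norm_idx UNIV Jc"
      by blast
    then show ?thesis using Ic Jc finP unfolding P_def by blast
  qed
  then show "norm_idx ?L (ideal_prod ?L I' J') \<ge> norm_idx ?L I' * norm_idx ?L J'"
    using tI(2) tJ(2) tK(2) memP unfolding norm_idx_def K_def[symmetric] Ic_def Jc_def by simp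
qed



lemma prod_sub_left: assumes I: "ideal_of UNIV I" shows "ideal_prod UNIV I J \<subseteq> I"
proof (rule prod_least[OF I])
  fix i j assume "i \<in> I" "j \<in> J"
  then have "j * i \<in> I" using idealD(5)[OF I] by blast
  then show "i * j \<in> I" by (simp add: mult.commute)
qed

lemma prod_sub_right: "ideal_of UNIV J \<Longrightarrow> ideal_prod UNIV I J \<subseteq> J"
  by (rule prod_least) (auto intro: idealD(5))

lemma prod_ideal_U: "ideal_of UNIV (ideal_prod (UNIV :: 'a::comm_ring_1 set) I J)"
  using prod_ideal[OF subring_UNIV] by blast

lemma bwd_local:
  fixes S :: "'a::idom set"
  assumes S: "subring_set S" and M: "maximal_ideal_of S M"
    and LM: "super_multiplicative (localize S M)"
    and I: "ideal_of UNIV I" and J: "ideal_of UNIV J"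
    and fin: "finite (cosets_in UNIV (ideal_prod UNIV I J))"
    and unit: "\<forall>s\<in>S. s \<notin> M \<longrightarrow> (\<exists>t. s * t - 1 \<in> ideal_prod UNIV I J)"
  shows "norm_idx UNIV (ideal_prod UNIV I J) \<ge> norm_idx UNIV I * norm_idx UNIV J"
proof -
  let ?L = "localize S M"
  define P where "P = ideal_prod UNIV I J"
  have P: "ideal_of UNIV P" unfolding P_def by (rule prod_ideal_U)
  have PI: "P \<subseteq> I" "P \<subseteq> J" unfolding P_def using prod_sub_left[OF I] prod_sub_right[OF J] by auto
  have one: "1 \<in> S" "1 \<notin> M" using subD(2)[OF S] max_basic(4)[OF S M] by auto
  have mem: "a \<in> X \<longleftrightarrow> Fract a 1 \<in> ext S M X" if X: "ideal_of UNIV X" "P \<subseteq> X" for X a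
  proof
    assume "a \<in> X" then show "Fract a 1 \<in> ext S M X" unfolding ext_def using one by blast
  next
    assume "Fract a 1 \<in> ext S M X"
    then obtain x s where xs: "Fract a 1 = Fract x s" "x \<in> X" "s \<in> S" "s \<notin> M" unfolding ext_def by blast
    have s0: "s \<noteq> 0" using xs U_nz[OF S M] by blast
    have as: "a * s = x" using xs(1) s0 by (simp add: eq_fract)
    obtain t where t: "s * t - 1 \<in> P" using unit xs unfolding P_def by blast
    have "a = t * (a * s) - a * (s * t - 1)" by (simp add: algebra_simps)
    moreover have "t * (a * s) \<in> X" using as xs(2) idealD(5)[OF X(1)] by blast
    moreover have "a * (s * t - 1) \<in> X" using t X(2) idealD(5)[OF X(1)] by blast
    ultimately show "a \<in> X" using idealD(4)[OF X(1)] by metis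
  qed
  have surj: "\<forall>q\<in>?L. \<exists>a. q - Fract a 1 \<in> ext S M X" if X: "ideal_of UNIV X" "P \<subseteq> X" for X
  proof
    fix q assume "q \<in> ?L"
    then obtain r s where q: "q = Fract r s" "s \<in> S" "s \<notin> M" using L_cases by blast
    have s0: "s \<noteq> 0" using q U_nz[OF S M] by blast
    obtain t where t: "s * t - 1 \<in> P" using unit q unfolding P_def by blast
    have "r * (s * t - 1) \<in> X" using t X(2) idealD(5)[OF X(1)] by blast
    then have "- (r * (s * t - 1)) \<in> X" using ideal_neg[OF X(1)] by blast
    then have "Fract (- (r * (s * t - 1))) s \<in> ext S M X" using q unfolding ext_def by blast
    moreover have "Fract (- (r * (s * t - 1))) s = q - Fract (r * t) 1"
      using q s0 by (simp add: eq_fract algebra_simps)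
    ultimately show "\<exists>a. q - Fract a 1 \<in> ext S M X" by metis
  qed
  have eI: "ideal_of ?L (ext S M I)" using ext_ideal[OF S M I] .
  have eJ: "ideal_of ?L (ext S M J)" using ext_ideal[OF S M J] .
  have eP: "ideal_of ?L (ext S M P)" using ext_ideal[OF S M P] .
  have LS: "subring_set ?L" using L_subring[OF S M] .
  have eprod: "ideal_prod ?L (ext S M I) (ext S M J) = ext S M P"
  proof
    show "ideal_prod ?L (ext S M I) (ext S M J) \<subseteq> ext S M P"
    proof (rule prod_least[OF eP])
      fix i j assume "i \<in> ext S M I" "j \<in> ext S M J"
      then obtain x s y t where h: "i = Fract x s" "x \<in> I" "s \<in> S" "s \<notin> M"
        "j = Fract y t" "y \<in> J" "t \<in> S" "t \<notin> M" unfolding ext_def by blast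
      have "x * y \<in> P" unfolding P_def using prod_mem h by blast
      moreover have "s * t \<in> S" "s * t \<notin> M" using U_mult[OF S M] h by auto
      moreover have "i * j = Fract (x * y) (s * t)" using h by simp
      ultimately show "i * j \<in> ext S M P" unfolding ext_def by blast
    qed
  next
    define Q where "Q = ideal_prod ?L (ext S M I) (ext S M J)"
    have Q: "ideal_of ?L Q" unfolding Q_def
      using prod_ideal[OF LS idealD(1)[OF eI] idealD(1)[OF eJ]] .
    have C: "ideal_of UNIV {a. Fract a 1 \<in> Q}" using con_ideal[OF S M Q] .
    have PQ: "P \<subseteq> {a. Fract a 1 \<in> Q}" unfolding P_def
    proof (rule prod_least[OF C])
      fix i j assume "i \<in> I" "j \<in> J"
      then have "Fract i 1 \<in> ext S M I" "Fract j 1 \<in> ext S M J" unfolding ext_def using one by blast+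
      then have "Fract i 1 * Fract j 1 \<in> Q" unfolding Q_def by (rule prod_mem)
      then show "i * j \<in> {a. Fract a 1 \<in> Q}" by simp
    qed
    show "ext S M P \<subseteq> Q"
    proof
      fix z assume "z \<in> ext S M P"
      then obtain p s where h: "z = Fract p s" "p \<in> P" "s \<in> S" "s \<notin> M" unfolding ext_def by blast
      have "Fract 1 s * Fract p 1 \<in> Q" using idealD(5)[OF Q L_mem[OF h(3,4)]] h(2) PQ by blast
      then show "z \<in> Q" using h by simp
    qed
  qed
  have Lone: "\<forall>a. Fract a 1 \<in> ?L" using L_one[OF S M] by blast
  note tI = transfer_card[OF eI I Lone _ surj[OF I PI(1)]]
  note tJ = transfer_card[OF eJ J Lone _ surj[OF J PI(2)]]
  note tP = transfer_card[OF eP P Lone _ surj[OF P order_refl]]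
  have memI: "\<forall>a. a \<in> I \<longleftrightarrow> Fract a 1 \<in> ext S M I" using mem[OF I PI(1)] by blast
  have memJ: "\<forall>a. a \<in> J \<longleftrightarrow> Fract a 1 \<in> ext S M J" using mem[OF J PI(2)] by blast
  have memP: "\<forall>a. a \<in> P \<longleftrightarrow> Fract a 1 \<in> ext S M P" using mem[OF P order_refl] by blast
  have finL: "finite (cosets_in ?L (ideal_prod ?L (ext S M I) (ext S M J)))"
    using tP(1)[OF memP] fin eprod unfolding P_def by simp
  have "\<forall>(I'::'a fract set) J'. ideal_of ?L I' \<and> ideal_of ?L J' \<and> finite (cosets_in ?L (ideal_prod ?L I' J')) \<longrightarrow>
        norm_idx ?L (ideal_prod ?L I' J') \<ge> norm_idx ?L I' * norm_idx ?L J'"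
    using LM unfolding super_multiplicative_def .
  then have "norm_idx ?L (ideal_prod ?L (ext S M I) (ext S M J)) \<ge> norm_idx ?L (ext S M I) * norm_idx ?L (ext S M J)"
    using eI eJ finL by blast
  then show ?thesis using tI(2)[OF memI] tJ(2)[OF memJ] tP(2)[OF memP] eprod
    unfolding norm_idx_def P_def by simp
qed



definition adj :: "'a::comm_ring_1 set \<Rightarrow> 'a \<Rightarrow> 'a set" where
  "adj X e = {x + e * r | x r. x \<in> X}"

lemma adj_ideal:
  assumes X: "ideal_of UNIV X"
  shows "ideal_of UNIV (adj X e)"
  unfolding ideal_of_def
proof (intro conjI ballI)
  show "adj X e \<subseteq> UNIV" by simp
  have "0 = 0 + e * 0" by simp
  then show "0 \<in> adj X e" unfolding adj_def using idealD(2)[OF X] by blast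
  fix p q assume "p \<in> adj X e" "q \<in> adj X e"
  then obtain x1 r1 x2 r2 where h: "x1 \<in> X" "p = x1 + e * r1" "x2 \<in> X" "q = x2 + e * r2"
    unfolding adj_def by blast
  have "p + q = (x1 + x2) + e * (r1 + r2)" "p - q = (x1 - x2) + e * (r1 - r2)"
    using h by (simp_all add: algebra_simps)
  moreover have "x1 + x2 \<in> X" "x1 - x2 \<in> X" using h idealD(3,4)[OF X] by auto
  ultimately show "p + q \<in> adj X e" "p - q \<in> adj X e" unfolding adj_def by blast+
next
  fix a p assume "p \<in> adj X e"
  then obtain x r where h: "x \<in> X" "p = x + e * r" unfolding adj_def by blast
  have "a * p = a * x + e * (a * r)" using h by (simp add: algebra_simps)
  moreover have "a * x \<in> X" using h idealD(5)[OF X] by blast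
  ultimately show "a * p \<in> adj X e" unfolding adj_def by blast
qed

lemma sub_adj: "ideal_of UNIV X \<Longrightarrow> X \<subseteq> adj X e"
proof
  fix x assume "x \<in> X"
  moreover have "x = x + e * 0" by simp
  ultimately show "x \<in> adj X e" unfolding adj_def by blast
qed

lemma e_adj: "ideal_of UNIV X \<Longrightarrow> e \<in> adj X e"
proof -
  assume X: "ideal_of UNIV X"
  have "e = 0 + e * 1" by simp
  then show ?thesis unfolding adj_def using idealD(2)[OF X] by blast
qed

lemma split_card:
  assumes X: "ideal_of UNIV X" and e: "e - e * e \<in> X"
  shows "finite (cosets_in UNIV X) \<longleftrightarrow> finite (cosets_in UNIV (adj X e) \<times> cosets_in UNIV (adj X (1 - e)))"
    "card (cosets_in UNIV X) = card (cosets_in UNIV (adj X e)) * card (cosets_in UNIV (adj X (1 - e)))"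
proof -
  define X1 where "X1 = adj X e"
  define X2 where "X2 = adj X (1 - e)"
  have X1: "ideal_of UNIV X1" unfolding X1_def using adj_ideal[OF X] .
  have X2: "ideal_of UNIV X2" unfolding X2_def using adj_ideal[OF X] .
  have inter: "z \<in> X \<longleftrightarrow> z \<in> X1 \<and> z \<in> X2" for z
  proof
    assume "z \<in> X" then show "z \<in> X1 \<and> z \<in> X2" using sub_adj[OF X] unfolding X1_def X2_def by blast
  next
    assume "z \<in> X1 \<and> z \<in> X2"
    then obtain x1 r1 x2 r2 where h: "x1 \<in> X" "z = x1 + e * r1" "x2 \<in> X" "z = x2 + (1 - e) * r2"
      unfolding X1_def X2_def adj_def by blast
    have eq1: "z * (1 - e) = (1 - e) * x1 + r1 * (e - e * e)" using h(2) by (simp add: algebra_simps)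
    have m1: "(1 - e) * x1 \<in> X" "r1 * (e - e * e) \<in> X" using h(1) e idealD(5)[OF X] by auto
    have z1: "z * (1 - e) \<in> X" unfolding eq1 by (rule idealD(3)[OF X m1])
    have "z * e = (x2 + (1 - e) * r2) * e" using h(4) by simp
    also have "\<dots> = e * x2 + r2 * (e - e * e)" by (simp add: algebra_simps)
    finally have eq2: "z * e = e * x2 + r2 * (e - e * e)" .
    have m2: "e * x2 \<in> X" "r2 * (e - e * e) \<in> X" using h(3) e idealD(5)[OF X] by auto
    have z2: "z * e \<in> X" unfolding eq2 by (rule idealD(3)[OF X m2])
    have "z * (1 - e) + z * e \<in> X" by (rule idealD(3)[OF X z1 z2])
    then show "z \<in> X" by (simp add: algebra_simps)
  qed
  have h: "\<forall>a\<in>UNIV. \<forall>b\<in>UNIV. cs X a = cs X b \<longleftrightarrow> (\<lambda>a. (cs X1 a, cs X2 a)) a = (\<lambda>a. (cs X1 a, cs X2 a)) b"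
    using cs_eq[OF X] cs_eq[OF X1] cs_eq[OF X2] inter by auto
  have img: "(\<lambda>a. (cs X1 a, cs X2 a)) ` UNIV = cosets_in UNIV X1 \<times> cosets_in UNIV X2"
  proof
    show "(\<lambda>a. (cs X1 a, cs X2 a)) ` UNIV \<subseteq> cosets_in UNIV X1 \<times> cosets_in UNIV X2"
      unfolding cosets_cs by blast
    show "cosets_in UNIV X1 \<times> cosets_in UNIV X2 \<subseteq> (\<lambda>a. (cs X1 a, cs X2 a)) ` UNIV"
    proof
      fix w assume "w \<in> cosets_in UNIV X1 \<times> cosets_in UNIV X2"
      then obtain a b where w: "w = (cs X1 a, cs X2 b)" unfolding cosets_cs by blast
      define c where "c = a * (1 - e) + b * e"
      have "c - a = 0 + e * (b - a)" unfolding c_def by (simp add: algebra_simps)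
      then have "c - a \<in> X1" unfolding X1_def adj_def using idealD(2)[OF X] by blast
      then have 1: "cs X1 c = cs X1 a" using cs_eq[OF X1] by blast
      have "c - b = 0 + (1 - e) * (a - b)" unfolding c_def by (simp add: algebra_simps)
      then have "c - b \<in> X2" unfolding X2_def adj_def using idealD(2)[OF X] by blast
      then have 2: "cs X2 c = cs X2 b" using cs_eq[OF X2] by blast
      have "(cs X1 c, cs X2 c) \<in> (\<lambda>a. (cs X1 a, cs X2 a)) ` UNIV" by (rule rangeI)
      then show "w \<in> (\<lambda>a. (cs X1 a, cs X2 a)) ` UNIV" using 1 2 w by simp
    qed
  qed
  show "finite (cosets_in UNIV X) \<longleftrightarrow> finite (cosets_in UNIV (adj X e) \<times> cosets_in UNIV (adj X (1 - e)))"
    using card_img_eq(1)[OF h] img unfolding X1_def X2_def by (simp add: cosets_cs)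
  show "card (cosets_in UNIV X) = card (cosets_in UNIV (adj X e)) * card (cosets_in UNIV (adj X (1 - e)))"
    using card_img_eq(2)[OF h] img unfolding X1_def X2_def by (simp add: cosets_cs card_cartesian_product)
qed

lemma adj_prod:
  assumes I: "ideal_of UNIV I" and J: "ideal_of UNIV J"
    and e: "e - e * e \<in> ideal_prod UNIV I J"
  shows "ideal_prod UNIV (adj I e) (adj J e) = adj (ideal_prod UNIV I J) e"
proof
  define P where "P = ideal_prod UNIV I J"
  have P: "ideal_of UNIV P" unfolding P_def by (rule prod_ideal_U)
  show "ideal_prod UNIV (adj I e) (adj J e) \<subseteq> adj (ideal_prod UNIV I J) e"
    unfolding P_def[symmetric]
  proof (rule prod_least[OF adj_ideal[OF P]])
    fix p q assume "p \<in> adj I e" "q \<in> adj J e"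
    then obtain i r j r' where h: "i \<in> I" "p = i + e * r" "j \<in> J" "q = j + e * r'"
      unfolding adj_def by blast
    have "p * q = i * j + e * (r * j + i * r' + e * r * r')" using h by (simp add: algebra_simps)
    moreover have "i * j \<in> P" unfolding P_def using h prod_mem by blast
    ultimately show "p * q \<in> adj P e" unfolding adj_def by blast
  qed
  define Q where "Q = ideal_prod UNIV (adj I e) (adj J e)"
  have Q: "ideal_of UNIV Q" unfolding Q_def by (rule prod_ideal_U)
  have PQ: "P \<subseteq> Q" unfolding P_def
  proof (rule prod_least[OF Q])
    fix i j assume "i \<in> I" "j \<in> J"
    then have "i \<in> adj I e" "j \<in> adj J e" using sub_adj I J by blast+
    then show "i * j \<in> Q" unfolding Q_def by (rule prod_mem)
  qed
  have eeQ: "e * e \<in> Q" unfolding Q_def using e_adj[OF I] e_adj[OF J] by (rule prod_mem)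
  show "adj (ideal_prod UNIV I J) e \<subseteq> ideal_prod UNIV (adj I e) (adj J e)"
    unfolding P_def[symmetric] Q_def[symmetric]
  proof
    fix z assume "z \<in> adj P e"
    then obtain x r where h: "x \<in> P" "z = x + e * r" unfolding adj_def by blast
    have eq: "z = x + (r * (e * e) + r * (e - e * e))" using h by (simp add: algebra_simps)
    have m1: "r * (e * e) \<in> Q" using eeQ idealD(5)[OF Q] by blast
    have m2: "r * (e - e * e) \<in> Q" using e PQ idealD(5)[OF Q] unfolding P_def by blast
    have m3: "x \<in> Q" using h PQ by blast
    show "z \<in> Q" unfolding eq by (rule idealD(3)[OF Q m3 idealD(3)[OF Q m1 m2]])
  qed
qed

lemma exists_max:
  assumes S: "subring_set S" and J0: "ideal_of S J0" "1 \<notin> J0" and fin: "finite (cosets_in S J0)"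
  shows "\<exists>M. maximal_ideal_of S M \<and> J0 \<subseteq> M"
proof -
  define F where "F = {M. ideal_of S M \<and> J0 \<subseteq> M \<and> 1 \<notin> M}"
  have "J0 \<in> F" unfolding F_def using J0 by blast
  then obtain M where M: "M \<in> F" and least: "\<forall>M'. M' \<in> F \<longrightarrow> card (cosets_in S M) \<le> card (cosets_in S M')"
    using ex_has_least_nat[of "\<lambda>M. M \<in> F" J0 "\<lambda>M. card (cosets_in S M)"] by blast
  have IM: "ideal_of S M" "J0 \<subseteq> M" "1 \<notin> M" using M unfolding F_def by auto
  have finM: "finite (cosets_in S M)" using mono_cosets(1)[OF J0(1) IM(1,2) fin] by blast
  have "maximal_ideal_of S M" unfolding maximal_ideal_of_def
  proof (intro conjI allI impI)
    show "ideal_of S M" using IM by blast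
    show "M \<noteq> S" using IM(3) subD(2)[OF S] by blast
    fix J' assume J': "ideal_of S J' \<and> M \<subseteq> J'"
    show "J' = M \<or> J' = S"
    proof (cases "1 \<in> J'")
      case True
      then have "\<forall>s\<in>S. s * 1 \<in> J'" using idealD(5) J' by blast
      then have "S \<subseteq> J'" by auto
      then show ?thesis using idealD(1) J' by blast
    next
      case False
      then have "J' \<in> F" unfolding F_def using J' IM by blast
      then have le: "card (cosets_in S M) \<le> card (cosets_in S J')" using least by blast
      show ?thesis
      proof (rule ccontr)
        assume "\<not> ?thesis"
        then obtain y where "y \<in> J'" "y \<notin> M" using J' by blast
        then have "card (cosets_in S J') < card (cosets_in S M)"
          using mono_cosets(2)[OF IM(1) _ _ finM] J' by blast
        then show False using le by simp
      qed
    qed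
  qed
  then show ?thesis using IM by blast
qed

lemma idem_exists:
  assumes P: "ideal_of UNIV P" and fin: "finite (cosets_in UNIV P)"
  shows "\<exists>N\<ge>1. (a::'a::comm_ring_1) ^ N - a ^ N * a ^ N \<in> P"
proof -
  define f where "f k = cs P (a ^ k)" for k
  have "range f \<subseteq> cosets_in UNIV P" unfolding f_def cosets_cs by blast
  then have "finite (range f)" using fin finite_subset by blast
  then obtain i j where ij: "i < j" "f i = f j" using pigeon_nat by blast
  then have aij: "a ^ i - a ^ j \<in> P" unfolding f_def using cs_eq[OF P] by blast
  define d where "d = j - i"
  have jd: "j = i + d" "d \<ge> 1" unfolding d_def using ij by auto
  have step: "a ^ n - a ^ (n + d) \<in> P" if "n \<ge> i" for n
  proof -
    have "a ^ n - a ^ (n + d) = a ^ (n - i) * (a ^ i - a ^ j)"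
      using that jd by (simp add: algebra_simps flip: power_add)
    then show ?thesis using aij idealD(5)[OF P] by simp
  qed
  have gen: "\<forall>n. n \<ge> i \<longrightarrow> a ^ n - a ^ (n + c * d) \<in> P" for c
  proof (induction c)
    case 0 then show ?case using idealD(2)[OF P] by simp
  next
    case (Suc c)
    show ?case
    proof (intro allI impI)
      fix n assume n: "n \<ge> i"
      have eq: "a ^ n - a ^ (n + Suc c * d) = (a ^ n - a ^ (n + c * d)) + (a ^ (n + c * d) - a ^ (n + c * d + d))"
        by (simp add: algebra_simps)
      have m1: "a ^ n - a ^ (n + c * d) \<in> P" using Suc n by blast
      have m2: "a ^ (n + c * d) - a ^ (n + c * d + d) \<in> P" using step n by simp
      show "a ^ n - a ^ (n + Suc c * d) \<in> P" unfolding eq by (rule idealD(3)[OF P m1 m2])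
    qed
  qed
  define N where "N = Suc i * d"
  have "i * 1 \<le> i * d" using jd(2) by (rule mult_le_mono2)
  then have "i \<le> i * d" by simp
  then have "i \<le> d + i * d" by linarith
  then have N: "N \<ge> i" "N \<ge> 1" unfolding N_def using jd(2) by simp_all
  have "a ^ N - a ^ (N + Suc i * d) \<in> P" using gen N(1) by blast
  then have "a ^ N - a ^ N * a ^ N \<in> P" unfolding N_def[symmetric] by (simp add: power_add)
  then show ?thesis using N(2) by blast
qed



lemma prime_pow:
  assumes S: "subring_set S" and M: "maximal_ideal_of S M" and a: "a \<in> S"
  shows "a ^ N \<in> M \<Longrightarrow> a \<in> M"
proof (induction N)
  case 0 then show ?case using max_basic(4)[OF S M] by simp
next
  case (Suc N)
  have "a * a ^ N \<in> M" using Suc.prems by simp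
  then show ?case using max_prime[OF S M a pow_S[OF S a]] Suc.IH by blast
qed

lemma pow_in_ideal:
  assumes S: "subring_set S" and M: "ideal_of S M" and a: "a \<in> M" "a \<in> S" and N: "N \<ge> 1"
  shows "a ^ N \<in> M"
proof -
  obtain k where k: "N = Suc k" using N by (cases N) auto
  have "a ^ N = a ^ (N - 1) * a" unfolding k by (simp add: power_Suc2)
  moreover have "a ^ (N - 1) * a \<in> M" using idealD(5)[OF M pow_S[OF S a(2)] a(1)] .
  ultimately show ?thesis by simp
qed

lemma ideal_one: "ideal_of UNIV X \<Longrightarrow> 1 \<in> X \<Longrightarrow> X = UNIV"
proof -
  assume X: "ideal_of UNIV X" "1 \<in> X"
  have "x * 1 \<in> X" for x using idealD(5)[OF X(1) _ X(2)] by blast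
  then show ?thesis by auto
qed

lemma norm_UNIV: "norm_idx UNIV (UNIV :: 'a::comm_ring_1 set) = 1"
proof -
  have "cs (UNIV :: 'a set) a = UNIV" for a
  proof -
    have "z = a + (z - a)" for z by simp
    then show ?thesis unfolding cs_def by blast
  qed
  then have "cosets_in UNIV (UNIV :: 'a set) = {UNIV}" unfolding cosets_cs by auto
  then show ?thesis unfolding norm_idx_def by simp
qed

lemma card_ge2:
  assumes X: "ideal_of UNIV X" and one: "1 \<notin> X" and fin: "finite (cosets_in UNIV X)"
  shows "card (cosets_in UNIV X) \<ge> 2"
proof -
  have ne: "cs X 0 \<noteq> cs X 1"
  proof
    assume "cs X 0 = cs X 1"
    then have "0 - 1 \<in> X" using cs_eq[OF X] by blast
    then have "- (0 - 1) \<in> X" using ideal_neg[OF X] by blast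
    then show False using one by simp
  qed
  have "{cs X 0, cs X 1} \<subseteq> cosets_in UNIV X" unfolding cosets_cs by blast
  then have "card {cs X 0, cs X 1} \<le> card (cosets_in UNIV X)" using fin by (rule card_mono[rotated])
  then show ?thesis using ne by simp
qed

lemma bwd:
  fixes S :: "'a::idom set"
  assumes S: "subring_set S"
    and H: "\<forall>M. maximal_ideal_of S M \<longrightarrow> super_multiplicative (localize S M)"
  shows "super_multiplicative (UNIV :: 'a set)"
proof -
  have main: "\<forall>I J. ideal_of UNIV I \<and> ideal_of UNIV J \<and> finite (cosets_in UNIV (ideal_prod UNIV I J))
      \<and> card (cosets_in UNIV (ideal_prod UNIV I J)) = n
      \<longrightarrow> norm_idx UNIV (ideal_prod UNIV I J) \<ge> norm_idx UNIV I * norm_idx UNIV (J :: 'a set)" for n :: nat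
  proof (induction n rule: less_induct)
    case (less n)
    show ?case
    proof (intro allI impI)
      fix I J :: "'a set"
      assume A: "ideal_of UNIV I \<and> ideal_of UNIV J \<and> finite (cosets_in UNIV (ideal_prod UNIV I J))
        \<and> card (cosets_in UNIV (ideal_prod UNIV I J)) = n"
      have I: "ideal_of UNIV I" and J: "ideal_of UNIV J" using A by auto
      define P where "P = ideal_prod UNIV I J"
      have fin: "finite (cosets_in UNIV P)" and cn: "card (cosets_in UNIV P) = n" using A P_def by auto
      have P: "ideal_of UNIV P" unfolding P_def by (rule prod_ideal_U)
      have PI: "P \<subseteq> I" "P \<subseteq> J" unfolding P_def using prod_sub_left[OF I] prod_sub_right[OF J] by auto
      have key: "norm_idx UNIV P \<ge> norm_idx UNIV I * norm_idx UNIV J"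
      proof (cases "1 \<in> P")
        case True
        then have "P = UNIV" "I = UNIV" "J = UNIV" using ideal_one P I J PI by blast+
        then show ?thesis using norm_UNIV[where 'a='a] by simp
      next
        case False
        define Sp where "Sp = S \<inter> P"
        have Sp: "ideal_of S Sp" unfolding ideal_of_def Sp_def
        proof (intro conjI ballI)
          show "S \<inter> P \<subseteq> S" by blast
          show "0 \<in> S \<inter> P" using subD(1)[OF S] idealD(2)[OF P] by blast
          fix x y assume "x \<in> S \<inter> P" "y \<in> S \<inter> P"
          then show "x + y \<in> S \<inter> P" "x - y \<in> S \<inter> P"
            using subD(3,4)[OF S] idealD(3,4)[OF P] by auto
        next
          fix c x assume "c \<in> S" "x \<in> S \<inter> P"
          then show "c * x \<in> S \<inter> P" using subD(5)[OF S] idealD(5)[OF P] by auto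
        qed
        have Sp1: "1 \<notin> Sp" using False Sp_def by blast
        have hS: "\<forall>a\<in>S. \<forall>b\<in>S. cs P a = cs P b \<longrightarrow> cs Sp a = cs Sp b"
        proof (intro ballI impI)
          fix a b assume ab: "a \<in> S" "b \<in> S" "cs P a = cs P b"
          have "a - b \<in> P" using ab(3) cs_eq[OF P] by blast
          moreover have "a - b \<in> S" using subD(4)[OF S ab(1,2)] .
          ultimately have "a - b \<in> Sp" unfolding Sp_def by blast
          then show "cs Sp a = cs Sp b" using cs_eq[OF Sp] by blast
        qed
        have "cs P ` S \<subseteq> cosets_in UNIV P" unfolding cosets_cs by blast
        then have "finite (cs P ` S)" using fin finite_subset by blast
        then have finSp: "finite (cosets_in S Sp)" using card_img_le(1)[OF hS] unfolding cosets_cs by blast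
        obtain M where M: "maximal_ideal_of S M" "Sp \<subseteq> M" using exists_max[OF S Sp Sp1 finSp] by blast
        show ?thesis
        proof (cases "\<forall>s\<in>S. s \<notin> M \<longrightarrow> (\<exists>t. s * t - 1 \<in> P)")
          case True
          have LM: "super_multiplicative (localize S M)" using H M(1) by blast
          have u: "\<forall>s\<in>S. s \<notin> M \<longrightarrow> (\<exists>t. s * t - 1 \<in> ideal_prod UNIV I J)"
            using True by (simp only: P_def)
          have f: "finite (cosets_in UNIV (ideal_prod UNIV I J))" using fin by (simp only: P_def)
          show ?thesis using bwd_local[OF S M(1) LM I J f u] by (simp only: P_def)
        next
          case False
          then have "\<exists>s\<in>S. s \<notin> M \<and> (\<forall>t. s * t - 1 \<notin> P)" by simp
          then obtain s where s: "s \<in> S" "s \<notin> M" "\<forall>t. s * t - 1 \<notin> P" by (elim bexE conjE)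
          define J0 where "J0 = {s * x + p | x p. x \<in> S \<and> p \<in> Sp}"
          have J0I: "s * x + p \<in> J0" if "x \<in> S" "p \<in> Sp" for x p
            unfolding J0_def using that by blast
          have J0E: "\<exists>x p. x \<in> S \<and> p \<in> Sp \<and> z = s * x + p" if "z \<in> J0" for z
            using that unfolding J0_def by blast
          have J0: "ideal_of S J0" unfolding ideal_of_def
          proof (intro conjI ballI)
            show "J0 \<subseteq> S"
            proof
              fix z assume "z \<in> J0"
              then obtain x p where h: "x \<in> S" "p \<in> Sp" "z = s * x + p" using J0E by blast
              have "p \<in> S" using h(2) unfolding Sp_def by blast
              then have "s * x + p \<in> S" using subD(3)[OF S subD(5)[OF S s(1) h(1)]] by blast
              then show "z \<in> S" using h(3) by simp
            qed
            have "s * 0 + 0 \<in> J0" using J0I[OF subD(1)[OF S] idealD(2)[OF Sp]] .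
            then show "0 \<in> J0" by simp
            fix p q assume "p \<in> J0" "q \<in> J0"
            then obtain x1 p1 x2 p2 where h: "x1 \<in> S" "p1 \<in> Sp" "p = s * x1 + p1" "x2 \<in> S" "p2 \<in> Sp" "q = s * x2 + p2"
              using J0E by metis
            have e1: "p + q = s * (x1 + x2) + (p1 + p2)" "p - q = s * (x1 - x2) + (p1 - p2)"
              unfolding h(3,6) by (simp_all add: algebra_simps)
            have "x1 + x2 \<in> S" "x1 - x2 \<in> S" using subD(3,4)[OF S h(1) h(4)] by auto
            moreover have "p1 + p2 \<in> Sp" "p1 - p2 \<in> Sp" using idealD(3,4)[OF Sp h(2) h(5)] by auto
            ultimately show "p + q \<in> J0" "p - q \<in> J0" unfolding e1 using J0I by auto
          next
            fix c p assume cp: "c \<in> S" "p \<in> J0"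
            then obtain x1 p1 where h: "x1 \<in> S" "p1 \<in> Sp" "p = s * x1 + p1"
              using J0E by metis
            have e1: "c * p = s * (c * x1) + c * p1" unfolding h(3) by (simp add: algebra_simps)
            have "c * x1 \<in> S" using subD(5)[OF S cp(1) h(1)] .
            moreover have "c * p1 \<in> Sp" using idealD(5)[OF Sp cp(1) h(2)] .
            ultimately show "c * p \<in> J0" unfolding e1 using J0I by auto
          qed
          have J01: "1 \<notin> J0"
          proof
            assume "1 \<in> J0"
            then obtain x p where h: "x \<in> S" "p \<in> Sp" "1 = s * x + p" using J0E by metis
            have "- p \<in> P" using h(2) ideal_neg[OF P] unfolding Sp_def by blast
            moreover have "s * x - 1 = - p" by (subst h(3)) simp
            ultimately have "s * x - 1 \<in> P" by simp
            then show False using s(3) by blast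
          qed
          have SpJ0: "Sp \<subseteq> J0"
          proof
            fix p assume "p \<in> Sp"
            then have "s * 0 + p \<in> J0" using J0I subD(1)[OF S] by blast
            then show "p \<in> J0" by simp
          qed
          have sJ0: "s \<in> J0"
          proof -
            have "s * 1 + 0 \<in> J0" using J0I[OF subD(2)[OF S] idealD(2)[OF Sp]] .
            then show ?thesis by simp
          qed
          have finJ0: "finite (cosets_in S J0)" using mono_cosets(1)[OF Sp J0 SpJ0 finSp] by blast
          obtain M2 where M2: "maximal_ideal_of S M2" "J0 \<subseteq> M2" using exists_max[OF S J0 J01 finJ0] by blast
          have IM: "ideal_of S M" "M \<subseteq> S" using max_basic[OF S M(1)] by auto
          have IM2: "ideal_of S M2" "M2 \<subseteq> S" using max_basic[OF S M2(1)] by auto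
          define MM where "MM = {u + v | u v. u \<in> M \<and> v \<in> M2}"
          have MMI: "u + v \<in> MM" if "u \<in> M" "v \<in> M2" for u v
            unfolding MM_def using that by blast
          have MME: "\<exists>u v. u \<in> M \<and> v \<in> M2 \<and> z = u + v" if "z \<in> MM" for z
            using that unfolding MM_def by blast
          have MM: "ideal_of S MM" unfolding ideal_of_def
          proof (intro conjI ballI)
            show "MM \<subseteq> S"
            proof
              fix z assume "z \<in> MM"
              then obtain u v where h: "u \<in> M" "v \<in> M2" "z = u + v" using MME by blast
              have "u \<in> S" "v \<in> S" using h IM IM2 by auto
              then have "u + v \<in> S" using subD(3)[OF S] by blast
              then show "z \<in> S" using h(3) by simp
            qed
            have "0 + 0 \<in> MM" using MMI[OF idealD(2)[OF IM(1)] idealD(2)[OF IM2(1)]] .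
            then show "0 \<in> MM" by simp
            fix p q assume "p \<in> MM" "q \<in> MM"
            then obtain u1 v1 u2 v2 where h: "u1 \<in> M" "v1 \<in> M2" "p = u1 + v1" "u2 \<in> M" "v2 \<in> M2" "q = u2 + v2"
              using MME by metis
            have e1: "p + q = (u1 + u2) + (v1 + v2)" "p - q = (u1 - u2) + (v1 - v2)"
              unfolding h(3,6) by (simp_all add: algebra_simps)
            have "u1 + u2 \<in> M" "u1 - u2 \<in> M" using idealD(3,4)[OF IM(1) h(1) h(4)] by auto
            moreover have "v1 + v2 \<in> M2" "v1 - v2 \<in> M2" using idealD(3,4)[OF IM2(1) h(2) h(5)] by auto
            ultimately show "p + q \<in> MM" "p - q \<in> MM" unfolding e1 using MMI by auto
          next
            fix c p assume cp: "c \<in> S" "p \<in> MM"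
            then obtain u v where h: "u \<in> M" "v \<in> M2" "p = u + v" using MME by metis
            have e1: "c * p = c * u + c * v" unfolding h(3) by (simp add: algebra_simps)
            have "c * u \<in> M" using idealD(5)[OF IM(1) cp(1) h(1)] .
            moreover have "c * v \<in> M2" using idealD(5)[OF IM2(1) cp(1) h(2)] .
            ultimately show "c * p \<in> MM" unfolding e1 using MMI by auto
          qed
          have MMM: "M \<subseteq> MM"
          proof
            fix u assume "u \<in> M"
            then have "u + 0 \<in> MM" using MMI idealD(2)[OF IM2(1)] by blast
            then show "u \<in> MM" by simp
          qed
          have sMM: "s \<in> MM"
          proof -
            have "0 + s \<in> MM" using MMI idealD(2)[OF IM(1)] sJ0 M2(2) by blast
            then show ?thesis by simp
          qed
          have "MM = M \<or> MM = S" using M(1) MM MMM unfolding maximal_ideal_of_def by blast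
          then have "MM = S" using sMM s(2) by blast
          then have "1 \<in> MM" using subD(2)[OF S] by simp
          then obtain a b where ab: "a \<in> M" "b \<in> M2" "1 = a + b" using MME by (meson)
          have aS: "a \<in> S" using ab IM by blast
          obtain N where N: "N \<ge> 1" "a ^ N - a ^ N * a ^ N \<in> P" using idem_exists[OF P fin] by blast
          define e where "e = a ^ N"
          have eS: "e \<in> S" unfolding e_def using pow_S[OF S aS] .
          have ee: "e - e * e \<in> P" using N(2) unfolding e_def .
          have eP: "e \<notin> P"
          proof
            assume "e \<in> P"
            then have "e \<in> M2" using eS M2(2) SpJ0 unfolding Sp_def by blast
            then have "a \<in> M2" using prime_pow[OF S M2(1) aS] unfolding e_def by blast
            then have "a + b \<in> M2" using idealD(3)[OF IM2(1)] ab(2) by blast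
            then show False using ab(3) max_basic(4)[OF S M2(1)] by simp
          qed
          have e1P: "1 - e \<notin> P"
          proof
            assume "1 - e \<in> P"
            moreover have "1 - e \<in> S" using subD(4)[OF S subD(2)[OF S] eS] .
            ultimately have "1 - e \<in> M" using M(2) unfolding Sp_def by blast
            moreover have "e \<in> M" unfolding e_def using pow_in_ideal[OF S IM(1) ab(1) aS N(1)] .
            ultimately have "(1 - e) + e \<in> M" using idealD(3)[OF IM(1)] by blast
            then show False using max_basic(4)[OF S M(1)] by simp
          qed
          have ee': "(1 - e) - (1 - e) * (1 - e) \<in> P"
          proof -
            have eq: "(1 - e) - (1 - e) * (1 - e) = e - e * e" by (simp add: algebra_simps)
            show ?thesis unfolding eq by (rule ee)
          qed
          have e11: "1 - (1 - e) = e" by simp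
          note sP = split_card[OF P ee]
          have P1: "1 \<notin> adj P e"
          proof
            assume "1 \<in> adj P e"
            then obtain p r where h: "p \<in> P" "1 = p + e * r" unfolding adj_def by blast
            have eq: "1 - e = (1 - e) * p + r * (e - e * e)"
            proof -
              have "1 - e = (1 - e) * (p + e * r)" unfolding h(2)[symmetric] by simp
              also have "\<dots> = (1 - e) * p + r * (e - e * e)" by (simp add: algebra_simps)
              finally show ?thesis .
            qed
            have "(1 - e) * p \<in> P" "r * (e - e * e) \<in> P" using h(1) ee idealD(5)[OF P] by auto
            then have "1 - e \<in> P" by (subst eq) (rule idealD(3)[OF P])
            then show False using e1P by blast
          qed
          have P2: "1 \<notin> adj P (1 - e)"
          proof
            assume "1 \<in> adj P (1 - e)"
            then obtain p r where h: "p \<in> P" "1 = p + (1 - e) * r" unfolding adj_def by blast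
            have eq: "e = e * p + r * (e - e * e)"
            proof -
              have "e = e * (p + (1 - e) * r)" unfolding h(2)[symmetric] by simp
              also have "\<dots> = e * p + r * (e - e * e)" by (simp add: algebra_simps)
              finally show ?thesis .
            qed
            have "e * p \<in> P" "r * (e - e * e) \<in> P" using h(1) ee idealD(5)[OF P] by auto
            then have "e \<in> P" by (subst eq) (rule idealD(3)[OF P])
            then show False using eP by blast
          qed
          have ne1: "cosets_in UNIV (adj P e) \<noteq> {}" "cosets_in UNIV (adj P (1 - e)) \<noteq> {}"
            unfolding cosets_in_def by auto
          have finP12: "finite (cosets_in UNIV (adj P e))" "finite (cosets_in UNIV (adj P (1 - e)))"
            using finite_cartesian_productD1[OF sP(1)[THEN iffD1, OF fin] ne1(2)]
              finite_cartesian_productD2[OF sP(1)[THEN iffD1, OF fin] ne1(1)] by auto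
          define c1 where "c1 = card (cosets_in UNIV (adj P e))"
          define c2 where "c2 = card (cosets_in UNIV (adj P (1 - e)))"
          have c1: "c1 \<ge> 2" unfolding c1_def using card_ge2[OF adj_ideal[OF P] P1 finP12(1)] .
          have c2: "c2 \<ge> 2" unfolding c2_def using card_ge2[OF adj_ideal[OF P] P2 finP12(2)] .
          have ncc: "n = c1 * c2" using sP(2) cn c1_def c2_def by simp
          have "c1 * 1 < c1 * c2" using c1 c2 by (intro mult_less_mono2) auto
          then have lt1: "c1 < n" using ncc by simp
          have "1 * c2 < c1 * c2" using c1 c2 by (intro mult_less_mono1) auto
          then have lt2: "c2 < n" using ncc by simp
          have pr1: "ideal_prod UNIV (adj I e) (adj J e) = adj P e"
            using adj_prod[OF I J ee[unfolded P_def]] unfolding P_def by simp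
          have pr2: "ideal_prod UNIV (adj I (1 - e)) (adj J (1 - e)) = adj P (1 - e)"
            using adj_prod[OF I J ee'[unfolded P_def]] unfolding P_def by simp
          have pre1: "ideal_of UNIV (adj I e) \<and> ideal_of UNIV (adj J e) \<and> finite (cosets_in UNIV (ideal_prod UNIV (adj I e) (adj J e)))
              \<and> card (cosets_in UNIV (ideal_prod UNIV (adj I e) (adj J e))) = c1"
            unfolding pr1 using adj_ideal[OF I] adj_ideal[OF J] finP12(1) c1_def by blast
          have IH1: "norm_idx UNIV (adj P e) \<ge> norm_idx UNIV (adj I e) * norm_idx UNIV (adj J e)"
            using less.IH[OF lt1, THEN spec, THEN spec, THEN mp, OF pre1] unfolding pr1 .
          have pre2: "ideal_of UNIV (adj I (1 - e)) \<and> ideal_of UNIV (adj J (1 - e)) \<and> finite (cosets_in UNIV (ideal_prod UNIV (adj I (1 - e)) (adj J (1 - e))))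
              \<and> card (cosets_in UNIV (ideal_prod UNIV (adj I (1 - e)) (adj J (1 - e)))) = c2"
            unfolding pr2 using adj_ideal[OF I] adj_ideal[OF J] finP12(2) c2_def by blast
          have IH2: "norm_idx UNIV (adj P (1 - e)) \<ge> norm_idx UNIV (adj I (1 - e)) * norm_idx UNIV (adj J (1 - e))"
            using less.IH[OF lt2, THEN spec, THEN spec, THEN mp, OF pre2] unfolding pr2 .
          have eI: "e - e * e \<in> I" "e - e * e \<in> J" using ee PI by auto
          have finI: "finite (cosets_in UNIV I)" using mono_cosets(1)[OF P I PI(1) fin] by blast
          have finJ: "finite (cosets_in UNIV J)" using mono_cosets(1)[OF P J PI(2) fin] by blast
          have nI: "norm_idx UNIV I = norm_idx UNIV (adj I e) * norm_idx UNIV (adj I (1 - e))"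
            using split_card(2)[OF I eI(1)] unfolding norm_idx_def .
          have nJ: "norm_idx UNIV J = norm_idx UNIV (adj J e) * norm_idx UNIV (adj J (1 - e))"
            using split_card(2)[OF J eI(2)] unfolding norm_idx_def .
          have nP: "norm_idx UNIV P = norm_idx UNIV (adj P e) * norm_idx UNIV (adj P (1 - e))"
            using sP(2) unfolding norm_idx_def .
          have "norm_idx UNIV P \<ge> (norm_idx UNIV (adj I e) * norm_idx UNIV (adj J e)) *
              (norm_idx UNIV (adj I (1 - e)) * norm_idx UNIV (adj J (1 - e)))"
            unfolding nP by (rule mult_le_mono[OF IH1 IH2])
          then show ?thesis unfolding nI nJ by (simp add: ac_simps)
        qed
      qed
      then show "norm_idx UNIV (ideal_prod UNIV I J) \<ge> norm_idx UNIV I * norm_idx UNIV J"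
        unfolding P_def .
    qed
  qed
  show ?thesis unfolding super_multiplicative_def using main by blast
qed

theorem lemma2p9:
  fixes S :: "'a::idom set"
  assumes "subring_set S"
  shows "super_multiplicative (UNIV :: 'a set) \<longleftrightarrow>
    (\<forall>m. maximal_ideal_of S m \<longrightarrow> super_multiplicative (localize S m))"
  using fwd[OF assms] bwd[OF assms] by blast


end
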